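(* Let $K_2>0$ be a constant such that every analytic function $g\colon\mathbb{D}\to G$ satisfies $\|g\|_{L^2(\mathbb{D},\mathcal{A})}\le K_2|g(0)|$ (such a constant exists). Then for every $z_0\in\mathbb{C}$, $r>0$ and every analytic function $f\colon D(z_0,r)\to G$, $$\mathcal{A}\big(\{z\in D(z_0,r):\operatorname{Re}f(z)>\operatorname{Re}f(z_0)/2\}\big)\ge\frac{1}{8K_2^2}\,\mathcal{A}\big(D(z_0,r)\big).$$
   Context: $\mathbb{D}$ is the open unit disk, $D(z_0,r)$ the open disk of center $z_0$ and radius $r$, $\mathcal{A}$ the normalized area measure $dx\,dy/\pi$ on $\mathbb{C}$, and $G=\{z\in\mathbb{C}\setminus\{0\}:|\arg z|<\pi/4\}$. *)

theory Defs
  imports "HOL-Complex_Analysis.Complex_Analysis"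
begin

definition sectorG :: "complex set" where
  "sectorG = {z. z \<noteq> 0 \<and> \<bar>Arg z\<bar> < pi / 4}"

definition area_measure :: "complex set \<Rightarrow> ennreal" where
  "area_measure S = emeasure lborel S / ennreal pi"

definition L2_norm_sq_disk :: "(complex \<Rightarrow> complex) \<Rightarrow> ennreal" where
  "L2_norm_sq_disk g =
     (\<integral>\<^sup>+ z. indicator (ball 0 1) z * ennreal ((cmod (g z))\<^sup>2) \<partial>lborel) / ennreal pi"

end

theory Submission
  imports Defs
begin


definition Lc :: "complex \<Rightarrow> real^2" where "Lc z = vector [Re z, Im z]"
definition Li :: "real^2 \<Rightarrow> complex" where "Li v = Complex (v$1) (v$2)"

lemma Li_Lc[simp]: "Li (Lc z) = z" by (simp add: Li_def Lc_def)
lemma Lc_Li[simp]: "Lc (Li v) = v"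
  unfolding Li_def Lc_def by (simp add: vec_eq_iff forall_2)

lemma Lc_meas[measurable]: "Lc \<in> borel_measurable borel"
proof -
  have "linear Lc" by (rule linearI) (auto simp: Lc_def vec_eq_iff forall_2)
  then show ?thesis by (intro borel_measurable_continuous_onI linear_continuous_on) (simp add: linear_conv_bounded_linear)
qed

lemma prod_Basis2: "(\<Prod>b\<in>(Basis::(real^2) set). f b) = f (axis 1 1) * f (axis 2 1)"
proof -
  have B: "(Basis::(real^2) set) = {axis 1 1, axis 2 1}"
    unfolding Basis_vec_def UNIV_2 by auto
  have "axis 1 (1::real) \<noteq> (axis 2 1 :: real^2)"
    by (simp add: axis_eq_axis)
  then show ?thesis unfolding B by simp
qed

lemma distr_Lc: "distr lborel borel Lc = (lborel :: (real^2) measure)"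
proof (rule lborel_eqI[symmetric])
  fix l u :: "real^2"
  assume le: "\<And>b. b \<in> Basis \<Longrightarrow> l \<bullet> b \<le> u \<bullet> b"
  have "Lc -` box l u = box (Li l) (Li u)"
    by (auto simp: Lc_def Li_def mem_box_cart mem_box Basis_complex_def forall_2)
  moreover have "l$1 \<le> u$1" "l$2 \<le> u$2" using le[of "axis 1 1"] le[of "axis 2 1"]
    by (auto simp: cart_eq_inner_axis Basis_vec_def inner_commute)
  ultimately show "emeasure (distr lborel borel Lc) (box l u) = (\<Prod>b\<in>Basis. (u - l) \<bullet> b)"
    by (simp add: emeasure_distr emeasure_lborel_box_eq Basis_complex_def prod_Basis2 Li_def
       inner_axis inner_axis' inner_commute)
qed simp

lemma Li_meas[measurable]: "Li \<in> borel_measurable borel"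
proof -
  have "linear Li" by (rule linearI) (auto simp: Li_def complex_eq_iff)
  then show ?thesis by (intro borel_measurable_continuous_onI linear_continuous_on) (simp add: linear_conv_bounded_linear)
qed

lemma orth_meas:
  fixes T :: "real^2 \<Rightarrow> real^2"
  assumes "orthogonal_transformation T"
  shows "T \<in> borel_measurable borel"
proof -
  have "bounded_linear T" using assms linear_conv_bounded_linear orthogonal_transformation_linear by blast
  then show ?thesis by (intro borel_measurable_continuous_onI linear_continuous_on)
qed

lemma distr_orth:
  fixes T :: "real^2 \<Rightarrow> real^2"
  assumes T: "orthogonal_transformation T"
  shows "distr lborel borel T = lborel"
proof (rule lborel_eqI[symmetric])
  fix l u :: "real^2"
  assume le: "\<And>b. b \<in> Basis \<Longrightarrow> l \<bullet> b \<le> u \<bullet> b"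
  let ?X = "inv T ` box l u"
  have eqX: "T -` box l u = ?X"
    using bij_vimage_eq_inv_image[OF orthogonal_transformation_bij[OF T]] by simp
  have Ti: "orthogonal_transformation (inv T)" using orthogonal_transformation_inv[OF T] .
  have Xb: "?X \<in> sets borel" unfolding eqX[symmetric] by (rule measurable_sets_borel[OF orth_meas[OF T]]) simp
  have Xbd: "bounded ?X"
    using Ti orthogonal_transformation_linear linear_conv_bounded_linear bounded_linear_image bounded_box by blast
  have "measure lborel ?X = measure lebesgue ?X" using Xb by simp
  also have "\<dots> = measure lebesgue (box l u)"
    using measure_orthogonal_image[OF Ti, of "box l u"] by simp
  also have "\<dots> = measure lborel (box l u)" by simp
  finally have meq: "measure lborel ?X = measure lborel (box l u)" .
  have "emeasure (distr lborel borel T) (box l u) = emeasure lborel ?X"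
  proof -
    have mT: "T \<in> measurable lborel borel" using orth_meas[OF T] by simp
    have "emeasure (distr lborel borel T) (box l u) = emeasure lborel (T -` box l u \<inter> space lborel)"
      by (rule emeasure_distr[OF mT]) simp
    then show ?thesis by (simp only: eqX space_lborel space_borel Int_UNIV_right)
  qed
  also have "\<dots> = ennreal (measure lborel ?X)"
    using emeasure_bounded_finite[OF Xbd] by (intro emeasure_eq_ennreal_measure) simp
  also have "\<dots> = emeasure lborel (box l u)"
    using meq emeasure_eq_ennreal_measure[of lborel "box l u"] emeasure_bounded_finite[OF bounded_box, of l u] by simp
  also have "\<dots> = (\<Prod>b\<in>Basis. (u - l) \<bullet> b)"
    using le by (simp add: emeasure_lborel_box_eq)
  finally show "emeasure (distr lborel borel T) (box l u) = (\<Prod>b\<in>Basis. (u - l) \<bullet> b)" .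
qed simp

lemma distr_rot:
  fixes c :: complex
  assumes c: "norm c = 1"
  shows "distr lborel borel (\<lambda>z. c * z) = lborel"
proof -
  define T where "T = (\<lambda>v. Lc (c * Li v))"
  have lin: "linear T" unfolding T_def
    by (rule linearI) (auto simp: Lc_def Li_def vec_eq_iff forall_2 algebra_simps)
  have c2: "(Re c)^2 + (Im c)^2 = 1" using c by (simp add: cmod_def)
  have "T v \<bullet> T w = v \<bullet> w" for v w
  proof -
    have "T v \<bullet> T w = (Re c * v$1 - Im c * v$2) * (Re c * w$1 - Im c * w$2)
       + (Re c * v$2 + Im c * v$1) * (Re c * w$2 + Im c * w$1)"
      by (simp add: T_def Lc_def Li_def inner_vec_def sum_2)
    also have "\<dots> = ((Re c)^2 + (Im c)^2) * (v$1 * w$1 + v$2 * w$2)"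
      by (simp add: algebra_simps power2_eq_square)
    also have "\<dots> = v \<bullet> w" using c2 by (simp add: inner_vec_def sum_2)
    finally show ?thesis .
  qed
  then have T: "orthogonal_transformation T" using lin by (simp add: orthogonal_transformation_def)
  have eq: "(\<lambda>z. c * z) = Li \<circ> (T \<circ> Lc)" by (auto simp: T_def)
  have m1: "Lc \<in> measurable lborel borel" by simp
  have m2: "T \<in> measurable borel borel" using orth_meas[OF T] .
  have m3: "Li \<in> measurable borel borel" by simp
  have m4: "T \<circ> Lc \<in> measurable lborel borel" by (rule measurable_comp[OF m1 m2])
  have e1: "distr lborel borel (T \<circ> Lc) = lborel"
  proof -
    have "distr lborel borel (T \<circ> Lc) = distr (distr lborel borel Lc) borel T"
      using distr_distr[OF m2 m1] by simp
    also have "\<dots> = distr lborel borel T" by (simp only: distr_Lc)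
    also have "\<dots> = lborel" by (rule distr_orth[OF T])
    finally show ?thesis .
  qed
  have e2: "distr lborel borel Li = (lborel :: complex measure)"
  proof -
    have "distr lborel borel Li = distr (distr lborel borel Lc) borel Li" by (simp only: distr_Lc)
    also have "\<dots> = distr lborel borel (Li \<circ> Lc)"
      using distr_distr[OF m3 m1] by simp
    also have "Li \<circ> Lc = (\<lambda>x. x)" by (auto simp: comp_def)
    also have "distr lborel borel (\<lambda>x::complex. x) = lborel" by (rule distr_id2) simp
    finally show ?thesis .
  qed
  have "distr lborel borel (\<lambda>z. c * z) = distr lborel borel (Li \<circ> (T \<circ> Lc))"
    unfolding eq ..
  also have "\<dots> = distr (distr lborel borel (T \<circ> Lc)) borel Li"
    using distr_distr[OF m3 m4] by simp
  also have "\<dots> = lborel" by (simp only: e1 e2)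
  finally show ?thesis .
qed



lemma ind_rot: "norm c = 1 \<Longrightarrow> indicator (ball 0 1) (c * z) = (indicator (ball (0::complex) 1) z :: 'a::zero_neq_one)"
  by (simp add: indicator_def norm_mult)

lemma pow_int_zero:
  assumes n: "n \<ge> 1"
  shows "(\<integral>z. indicator (ball 0 1) z *\<^sub>R z^n \<partial>lborel) = (0::complex)"
proof -
  define c where "c = cis (pi / n)"
  have c1: "norm c = 1" by (simp add: c_def)
  have "real n * (pi / real n) = pi" using n by simp
  moreover have "c^n = cis (real n * (pi / real n))" unfolding c_def by (rule Complex.DeMoivre)
  ultimately have cn: "c ^ n = -1" by simp
  define F where "F = (\<lambda>z::complex. indicator (ball 0 1) z *\<^sub>R z^n)"
  have Fm: "F \<in> borel_measurable borel" unfolding F_def by (intro borel_measurable_continuous_on_indicator) (auto intro!: continuous_intros)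
  have mc: "(\<lambda>z. c * z) \<in> measurable lborel borel" by simp
  have "integral\<^sup>L lborel F = integral\<^sup>L (distr lborel borel (\<lambda>z. c * z)) F"
    by (simp only: distr_rot[OF c1])
  also have "\<dots> = (\<integral>z. F (c * z) \<partial>lborel)"
    by (rule integral_distr[OF mc Fm])
  also have "\<dots> = (\<integral>z. - F z \<partial>lborel)"
    by (rule Bochner_Integration.integral_cong) (auto simp: F_def ind_rot[OF c1] power_mult_distrib cn)
  also have "\<dots> = - integral\<^sup>L lborel F" by simp
  finally show ?thesis unfolding F_def by simp
qed



lemma emeasure_ball_C: "r \<ge> 0 \<Longrightarrow> emeasure lborel (ball (c::complex) r) = ennreal (pi * r^2)"
  using emeasure_ball[of r c] by (simp add: unit_ball_vol_2)

lemma measure_ball_C: "r \<ge> 0 \<Longrightarrow> measure lborel (ball (c::complex) r) = pi * r^2"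
  by (simp add: measure_def emeasure_ball_C)

lemma int_ball:
  fixes h :: "complex \<Rightarrow> 'b::{banach, second_countable_topology}"
  assumes "continuous_on (cball 0 1) h"
  shows "integrable lborel (\<lambda>z. indicator (ball 0 1) z *\<^sub>R h z)"
proof -
  have "integrable lborel (\<lambda>z. indicator (ball 0 1) z *\<^sub>R (indicator (cball 0 1) z *\<^sub>R h z))"
    by (intro integrable_mult_indicator borel_integrable_compact assms) auto
  moreover have "(\<lambda>z. indicator (ball 0 1) z *\<^sub>R (indicator (cball 0 1) z *\<^sub>R h z)) = (\<lambda>z. indicator (ball 0 1) z *\<^sub>R h z)"
    by (auto simp: indicator_def fun_eq_iff)
  ultimately show ?thesis by (simp only:)
qed

lemma mean_value_disk:
  assumes R: "R > 1" and g: "g holomorphic_on ball 0 R"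
  shows "(\<integral>z. indicator (ball 0 1) z *\<^sub>R g z \<partial>lborel) = of_real pi * g 0"
proof -
  define a where "a n = (deriv ^^ n) g 0 / fact n" for n
  have sums: "(\<lambda>n. a n * w^n) sums g w" if "w \<in> ball 0 R" for w
    using holomorphic_power_series[OF g that] by (simp add: a_def)
  define \<rho> where "\<rho> = (1 + R) / 2"
  have "norm (complex_of_real \<rho>) = \<rho>" unfolding norm_of_real using R by (simp add: \<rho>_def)
  moreover have "1 < \<rho>" "\<rho> < R" using R by (auto simp: \<rho>_def)
  ultimately have nr: "norm (1::complex) < norm (complex_of_real \<rho>)" "complex_of_real \<rho> \<in> ball 0 R" by auto
  then have "summable (\<lambda>n. a n * complex_of_real \<rho> ^ n)" using sums nr(2) sums_summable by blast
  from powser_insidea[OF this nr(1)] have sa: "summable (\<lambda>n. norm (a n))"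
    by simp
  define f where "f n z = indicator (ball 0 1) z *\<^sub>R (a n * z^n)" for n z
  have fint: "integrable lborel (f n)" for n
    unfolding f_def by (intro int_ball continuous_intros)
  have fb: "norm (f n z) \<le> indicator (ball 0 1) z * norm (a n)" for n z
  proof (cases "z \<in> ball 0 1")
    case True
    then have "norm z ^ n \<le> 1" by (simp add: power_le_one)
    then have "norm (a n) * norm z ^ n \<le> norm (a n)" by (simp add: mult_left_le)
    then show ?thesis using True by (simp add: f_def norm_mult norm_power)
  qed (simp add: f_def)
  have AEs: "AE x in lborel. summable (\<lambda>i. norm (f i x))"
  proof (rule AE_I2)
    fix x show "summable (\<lambda>i. norm (f i x))"
    proof (rule summable_comparison_test'[OF sa])
      fix n :: nat
      have "indicator (ball 0 1) x * norm (a n) \<le> norm (a n)"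
        by (simp add: indicator_def)
      then show "norm (norm (f n x)) \<le> norm (a n)" using fb[of n x] by simp
    qed
  qed
  have intn: "(\<integral>x. norm (f n x) \<partial>lborel) \<le> norm (a n) * pi" for n
  proof -
    have "(\<integral>x. norm (f n x) \<partial>lborel) \<le> (\<integral>x. indicator (ball (0::complex) 1) x * norm (a n) \<partial>lborel)"
    proof (rule Bochner_Integration.integral_mono)
      show "integrable lborel (\<lambda>x. indicator (ball (0::complex) 1) x * norm (a n))"
        using int_ball[of "\<lambda>_. norm (a n)"] by simp
    qed (use fb fint in auto)
    also have "\<dots> = norm (a n) * pi" by (simp add: measure_ball_C)
    finally show ?thesis .
  qed
  have si: "summable (\<lambda>i. (\<integral>x. norm (f i x) \<partial>lborel))"
  proof (rule summable_comparison_test'[where g="\<lambda>i. norm (a i) * pi"])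
    show "summable (\<lambda>i. norm (a i) * pi)" using sa by (rule summable_mult2)
    fix n :: nat show "norm (\<integral>x. norm (f n x) \<partial>lborel) \<le> norm (a n) * pi"
      using intn[of n] by simp
  qed
  have eq: "indicator (ball 0 1) z *\<^sub>R g z = (\<Sum>i. f i z)" for z
  proof (cases "z \<in> ball 0 1")
    case True
    then have "z \<in> ball 0 R" using R by auto
    then show ?thesis using True sums_unique[OF sums] by (simp add: f_def)
  qed (simp add: f_def)
  have fi: "integral\<^sup>L lborel (f i) = (if i = 0 then of_real pi * g 0 else 0)" for i
  proof (cases "i = 0")
    case True
    have "f 0 = (\<lambda>z. a 0 * complex_of_real (indicator (ball 0 1) z))"
      by (auto simp: f_def fun_eq_iff indicator_def)
    then show ?thesis using True by (simp add: a_def measure_ball_C)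
  next
    case False
    have fe: "f i = (\<lambda>z. a i * (indicator (ball 0 1) z *\<^sub>R z^i))"
      by (auto simp: f_def fun_eq_iff indicator_def)
    have "integral\<^sup>L lborel (f i) = a i * (\<integral>z. indicator (ball 0 1) z *\<^sub>R z^i \<partial>lborel)"
      unfolding fe by (rule integral_mult_right_zero)
    then show ?thesis using False pow_int_zero[of i] by simp
  qed
  have "(\<integral>z. indicator (ball 0 1) z *\<^sub>R g z \<partial>lborel) = (\<integral>z. (\<Sum>i. f i z) \<partial>lborel)"
    by (simp only: eq)
  also have "\<dots> = (\<Sum>i. integral\<^sup>L lborel (f i))"
    by (rule integral_suminf[OF fint AEs si])
  also have "\<dots> = of_real pi * g 0"
    unfolding fi using sums_single[of 0 "\<lambda>_. of_real pi * g 0"] by (simp add: sums_iff)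
  finally show ?thesis .
qed



lemma sector_facts:
  assumes "z \<in> sectorG"
  shows "Re z > 0" "(norm z)^2 \<le> 2 * (Re z)^2"
proof -
  from assms have z0: "z \<noteq> 0" and A: "\<bar>Arg z\<bar> < pi/4" by (auto simp: sectorG_def)
  define t where "t = Arg z"
  have zr: "z = rcis (cmod z) t" unfolding t_def by (rule rcis_cmod_Arg[symmetric])
  have re: "Re z = cmod z * cos t" and im: "Im z = cmod z * sin t"
    by (subst zr; simp)+
  have "0 < cos t" using A pi_gt_zero by (intro cos_gt_zero_pi) (auto simp: t_def)
  moreover have "0 < cmod z" using z0 by simp
  ultimately show "Re z > 0" using re by simp
  have "0 < cos (2*t)" using A pi_gt_zero by (intro cos_gt_zero_pi) (auto simp: t_def)
  then have "(sin t)^2 \<le> (cos t)^2" by (simp add: cos_double)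
  then have "(Im z)^2 \<le> (Re z)^2" unfolding re im by (simp add: power_mult_distrib mult_left_mono)
  then show "(norm z)^2 \<le> 2 * (Re z)^2" by (simp add: cmod_power2)
qed

lemma amgm_aux:
  fixes x t :: real assumes "t > 0"
  shows "x \<le> t/2 * x^2 + 1/(2*t)"
proof -
  have "0 \<le> (t*x - 1)^2" by simp
  then have "0 \<le> t^2*x^2 - 2*t*x + 1" by (simp add: power2_eq_square algebra_simps)
  then have "2*t*x \<le> t^2*x^2 + 1" by simp
  then have "2*t*x / (2*t) \<le> (t^2*x^2 + 1) / (2*t)" using assms by (intro divide_right_mono) auto
  also have "(t^2*x^2 + 1) / (2*t) = t/2 * x^2 + 1/(2*t)" using assms
    by (simp add: field_simps power2_eq_square)
  finally show ?thesis using assms by simp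
qed

lemma disk_case:
  fixes K2 :: real
  assumes K2_pos: "K2 > 0"
    and K2_bound: "\<And>g. g holomorphic_on ball 0 1 \<Longrightarrow> g ` ball 0 1 \<subseteq> sectorG \<Longrightarrow>
           L2_norm_sq_disk g \<le> ennreal ((K2 * cmod (g 0))\<^sup>2)"
    and R: "R > 1" and g: "g holomorphic_on ball 0 R" and gG: "g ` ball 0 1 \<subseteq> sectorG"
  shows "pi / (8 * K2^2) \<le> measure lborel {w \<in> ball 0 1. Re (g w) > Re (g 0) / 2}"
proof -
  define a where "a = Re (g 0)"
  define D :: "complex set" where "D = ball 0 1"
  define E where "E = {w \<in> ball 0 1. Re (g w) > a / 2}"
  have g0: "g 0 \<in> sectorG" using gG by auto
  have a0: "a > 0" and ga: "(norm (g 0))^2 \<le> 2 * a^2"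
    using sector_facts[OF g0] by (auto simp: a_def)
  have gc: "continuous_on (ball 0 R) g" using g holomorphic_on_imp_continuous_on by blast
  have sub: "cball 0 1 \<subseteq> ball (0::complex) R" using R by auto
  have gcc: "continuous_on (cball 0 1) g" using continuous_on_subset[OF gc sub] .
  have gc1: "continuous_on (ball 0 1) g" using continuous_on_subset[OF gcc] by auto
  have Eopen: "open E"
  proof -
    have "open (ball 0 1 \<inter> g -` {z. Re z > a/2})"
      by (rule continuous_open_preimage[OF gc1 open_ball open_halfspace_Re_gt])
    moreover have "ball 0 1 \<inter> g -` {z. Re z > a/2} = E" by (auto simp: E_def)
    ultimately show ?thesis by simp
  qed
  have EsubD: "E \<subseteq> D" by (auto simp: E_def D_def)
  have Eb: "E \<in> sets lborel" using Eopen by simp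
  have Ef: "emeasure lborel E < \<infinity>"
    using emeasure_bounded_finite[of E] EsubD bounded_subset[of D E] by (auto simp: D_def)
  have Df: "emeasure lborel D < \<infinity>" using emeasure_bounded_finite[of D] by (auto simp: D_def)
  have intE: "integrable lborel (indicator E :: complex \<Rightarrow> real)"
    using Eb Ef by (simp add: integrable_indicator_iff)
  have intD: "integrable lborel (indicator D :: complex \<Rightarrow> real)"
    using Df by (simp add: integrable_indicator_iff D_def)
  have intS: "integrable lborel (\<lambda>z. indicator D z *\<^sub>R (norm (g z))^2)"
    unfolding D_def by (intro int_ball continuous_intros gcc)
  have intu: "integrable lborel (\<lambda>z. indicator D z *\<^sub>R g z)"
    unfolding D_def by (intro int_ball gcc)
  define S where "S = (\<integral>z. indicator D z *\<^sub>R (norm (g z))^2 \<partial>lborel)"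
  define mE where "mE = measure lborel E"
  have mv: "(\<integral>z. indicator D z *\<^sub>R Re (g z) \<partial>lborel) = pi * a"
  proof -
    have "(\<integral>z. Re (indicator D z *\<^sub>R g z) \<partial>lborel) = Re (\<integral>z. indicator D z *\<^sub>R g z \<partial>lborel)"
      by (rule integral_bounded_linear[OF bounded_linear_Re intu])
    also have "\<dots> = pi * a" using mean_value_disk[OF R g] by (simp add: D_def a_def)
    finally show ?thesis by simp
  qed
  have Sle: "S \<le> 2 * pi * K2^2 * a^2"
  proof -
    have "ball 0 1 \<subseteq> ball (0::complex) R" using R by auto
    then have g1: "g holomorphic_on ball 0 1" using holomorphic_on_subset[OF g] by blast
    have "(\<integral>\<^sup>+ z. indicator (ball 0 1) z * ennreal ((cmod (g z))\<^sup>2) \<partial>lborel)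
        = (\<integral>\<^sup>+ z. ennreal (indicator D z *\<^sub>R (norm (g z))^2) \<partial>lborel)"
      by (intro nn_integral_cong) (auto simp: indicator_def D_def)
    also have "\<dots> = ennreal S" unfolding S_def
      by (rule nn_integral_eq_integral[OF intS]) auto
    finally have "L2_norm_sq_disk g = ennreal S / ennreal pi" by (simp add: L2_norm_sq_disk_def)
    also have "\<dots> = ennreal (S / pi)"
      by (rule divide_ennreal) (auto simp: S_def intro!: Bochner_Integration.integral_nonneg)
    finally have "ennreal (S / pi) \<le> ennreal ((K2 * cmod (g 0))\<^sup>2)" using K2_bound[OF g1 gG] by simp
    then have "S / pi \<le> (K2 * cmod (g 0))\<^sup>2" by (simp add: ennreal_le_iff)
    then have "S \<le> pi * (K2^2 * (cmod (g 0))\<^sup>2)" by (simp add: field_simps power_mult_distrib)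
    also have "\<dots> \<le> pi * (K2^2 * (2 * a^2))"
      using ga by (intro mult_left_mono) auto
    finally show ?thesis by (simp add: algebra_simps)
  qed
  define t where "t = 1 / (4 * K2^2 * a)"
  have t0: "t > 0" using K2_pos a0 by (simp add: t_def)
  have pw: "indicator D z *\<^sub>R Re (g z) \<le>
     t/2 * (indicator D z *\<^sub>R (norm (g z))^2) + 1/(2*t) * indicator E z + a/2 * indicator D z" for z
  proof (cases "z \<in> E")
    case True
    then have "z \<in> D" using EsubD by auto
    have "Re (g z) \<le> norm (g z)" by (rule complex_Re_le_cmod)
    also have "\<dots> \<le> t/2 * (norm (g z))^2 + 1/(2*t)" by (rule amgm_aux[OF t0])
    finally show ?thesis using True \<open>z \<in> D\<close> a0 by simp
  next
    case False
    show ?thesis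
    proof (cases "z \<in> D")
      case True
      then have "Re (g z) \<le> a/2" using False by (auto simp: E_def D_def)
      moreover have "0 \<le> t/2 * (cmod (g z))\<^sup>2" using t0 by simp
      ultimately have "Re (g z) \<le> t/2 * (cmod (g z))\<^sup>2 + a/2" by linarith
      then show ?thesis using True False by simp
    qed (use False t0 a0 in simp)
  qed
  define \<Psi> where "\<Psi> z = t/2 * (indicator D z *\<^sub>R (norm (g z))^2) + 1/(2*t) * indicator E z + a/2 * indicator D z" for z
  have i1: "integrable lborel (\<lambda>z. t/2 * (indicator D z *\<^sub>R (norm (g z))^2))"
    using intS by (rule integrable_mult_right)
  have i2: "integrable lborel (\<lambda>z. 1/(2*t) * indicator E z)"
    using intE by (rule integrable_mult_right)
  have i3: "integrable lborel (\<lambda>z. a/2 * indicator D z)"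
    using intD by (rule integrable_mult_right)
  have iPsi: "integrable lborel \<Psi>" unfolding \<Psi>_def by (intro Bochner_Integration.integrable_add i1 i2 i3)
  have intuR: "integrable lborel (\<lambda>z. indicator D z *\<^sub>R Re (g z))"
    unfolding D_def by (intro int_ball continuous_intros gcc)
  have "pi * a \<le> integral\<^sup>L lborel \<Psi>"
    unfolding mv[symmetric]
    by (rule Bochner_Integration.integral_mono[OF intuR iPsi]) (simp only: \<Psi>_def pw)
  also have "integral\<^sup>L lborel \<Psi> = t/2 * S + 1/(2*t) * mE + a/2 * pi"
  proof -
    have "integral\<^sup>L lborel \<Psi> = (\<integral>z. t/2 * (indicator D z *\<^sub>R (norm (g z))^2) \<partial>lborel)
        + (\<integral>z. 1/(2*t) * indicator E z \<partial>lborel) + (\<integral>z. a/2 * indicator D z \<partial>lborel)"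
      unfolding \<Psi>_def using i1 i2 i3 by (simp del: real_scaleR_def)
    also have "(\<integral>z. t/2 * (indicator D z *\<^sub>R (norm (g z))^2) \<partial>lborel) = t/2 * S"
      unfolding S_def by (rule integral_mult_right_zero)
    also have "(\<integral>z. 1/(2*t) * indicator E z \<partial>lborel) = 1/(2*t) * mE"
      by (simp add: mE_def)
    also have "(\<integral>z. a/2 * indicator D z \<partial>lborel) = a/2 * pi"
      by (simp add: D_def measure_ball_C)
    finally show ?thesis .
  qed
  finally have main: "pi * a \<le> t/2 * S + 1/(2*t) * mE + a/2 * pi" .
  have "t/2 * S \<le> t/2 * (2 * pi * K2^2 * a^2)" using Sle t0 by (intro mult_left_mono) auto
  also have "\<dots> = pi * a / 4" using K2_pos a0 by (simp add: t_def field_simps power2_eq_square)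
  moreover have "a/2 * pi = pi * a / 2" by simp
  ultimately have "pi * a / 4 \<le> 1/(2*t) * mE" using main by linarith
  also have "1/(2*t) = 2 * K2^2 * a" by (simp add: t_def)
  finally have "pi * a / 4 \<le> 2 * K2^2 * a * mE" .
  then have "pi / 4 \<le> 2 * K2^2 * mE" using a0
    by (smt (verit, ccfv_SIG) mult.commute mult.left_commute mult_le_cancel_left_pos times_divide_eq_right)
  then have "pi / (8 * K2^2) \<le> mE" using K2_pos by (simp add: field_simps)
  then show ?thesis by (simp add: mE_def E_def a_def)
qed



lemma scale_emeasure:
  fixes z0 :: complex and s :: real
  assumes s: "s > 0" and A: "A \<in> sets borel"
  shows "emeasure lborel A = ennreal (s^2) * emeasure lborel ((\<lambda>x. z0 + s *\<^sub>R x) -` A)"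
proof -
  have m: "(\<lambda>x::complex. z0 + s *\<^sub>R x) \<in> measurable lborel borel" by simp
  have "emeasure lborel A = emeasure (density (distr lborel borel (\<lambda>x::complex. z0 + s *\<^sub>R x)) (\<lambda>_. ennreal (\<bar>s\<bar> ^ DIM(complex)))) A"
    using arg_cong[OF lborel_affine[of s z0], of "\<lambda>M. emeasure M A"] s by simp
  also have "\<dots> = ennreal (\<bar>s\<bar> ^ DIM(complex)) * emeasure (distr lborel borel (\<lambda>x::complex. z0 + s *\<^sub>R x)) A"
    by (rule emeasure_density_const) (simp add: A)
  also have "emeasure (distr lborel borel (\<lambda>x::complex. z0 + s *\<^sub>R x)) A = emeasure lborel ((\<lambda>x. z0 + s *\<^sub>R x) -` A \<inter> space lborel)"
    by (rule emeasure_distr[OF m A])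
  finally show ?thesis using s by simp
qed

lemma step_s:
  fixes K2 :: real
  assumes K2_pos: "K2 > 0"
    and K2_bound: "\<And>g. g holomorphic_on ball 0 1 \<Longrightarrow> g ` ball 0 1 \<subseteq> sectorG \<Longrightarrow>
           L2_norm_sq_disk g \<le> ennreal ((K2 * cmod (g 0))\<^sup>2)"
    and s: "0 < s" "s < r" and f: "f holomorphic_on ball z0 r" and fG: "f ` ball z0 r \<subseteq> sectorG"
  shows "ennreal (s^2 * (pi / (8 * K2^2))) \<le> emeasure lborel {z \<in> ball z0 s. Re (f z) > Re (f z0) / 2}"
proof -
  define g where "g w = f (z0 + s *\<^sub>R w)" for w
  define R where "R = r / s"
  have R1: "R > 1" using s by (simp add: R_def)
  have maps: "(\<lambda>w. z0 + s *\<^sub>R w) ` ball 0 R \<subseteq> ball z0 r"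
  proof
    fix z assume "z \<in> (\<lambda>w. z0 + s *\<^sub>R w) ` ball 0 R"
    then obtain w where w: "norm w < R" "z = z0 + s *\<^sub>R w" by auto
    have "norm (s *\<^sub>R w) = s * norm w" using s by simp
    also have "\<dots> < s * R" using w s by simp
    also have "\<dots> = r" using s by (simp add: R_def)
    finally show "z \<in> ball z0 r" using w by (simp add: dist_norm)
  qed
  have gh: "g holomorphic_on ball 0 R"
  proof -
    have "(f \<circ> (\<lambda>w. z0 + s *\<^sub>R w)) holomorphic_on ball 0 R"
      by (rule holomorphic_on_compose_gen[OF _ f maps])
         (auto simp: scaleR_conv_of_real intro!: holomorphic_intros)
    moreover have "(f \<circ> (\<lambda>w. z0 + s *\<^sub>R w)) = g" by (simp add: g_def fun_eq_iff)
    ultimately show ?thesis by simp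
  qed
  have "ball 0 1 \<subseteq> ball (0::complex) R" using R1 by auto
  then have gG: "g ` ball 0 1 \<subseteq> sectorG" using maps fG by (force simp: g_def)
  have dc: "pi / (8 * K2^2) \<le> measure lborel {w \<in> ball 0 1. Re (g w) > Re (g 0) / 2}"
    by (rule disk_case[OF K2_pos K2_bound R1 gh gG])
  define A where "A = {z \<in> ball z0 s. Re (f z) > Re (f z0) / 2}"
  have fc: "continuous_on (ball z0 s) f"
  proof (rule continuous_on_subset[OF holomorphic_on_imp_continuous_on[OF f]])
    show "ball z0 s \<subseteq> ball z0 r" using s by auto
  qed
  have Aeq: "A = ball z0 s \<inter> f -` {z. Re z > Re (f z0) / 2}" by (auto simp: A_def)
  have Aopen: "open A" unfolding Aeq by (rule continuous_open_preimage[OF fc open_ball open_halfspace_Re_gt])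
  have pre: "(\<lambda>x. z0 + s *\<^sub>R x) -` A = {w \<in> ball 0 1. Re (g w) > Re (g 0) / 2}"
  proof -
    have "z0 + s *\<^sub>R x \<in> ball z0 s \<longleftrightarrow> x \<in> ball 0 1" for x
      using s by (simp add: dist_norm)
    then show ?thesis by (auto simp: A_def g_def)
  qed
  have fin: "emeasure lborel {w \<in> ball 0 1. Re (g w) > Re (g 0) / 2} < \<infinity>"
    by (rule le_less_trans[OF emeasure_mono[of _ "ball 0 1"] emeasure_lborel_ball_finite]) auto
  have "ennreal (pi / (8 * K2^2)) \<le> ennreal (measure lborel {w \<in> ball 0 1. Re (g w) > Re (g 0) / 2})"
    using dc by (rule ennreal_leI)
  also have "\<dots> = emeasure lborel {w \<in> ball 0 1. Re (g w) > Re (g 0) / 2}"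
    using fin by (simp add: emeasure_eq_ennreal_measure less_top)
  finally have "ennreal (s^2) * ennreal (pi / (8 * K2^2)) \<le> ennreal (s^2) * emeasure lborel {w \<in> ball 0 1. Re (g w) > Re (g 0) / 2}"
    by (rule mult_left_mono) simp
  also have "\<dots> = emeasure lborel A"
    using scale_emeasure[OF s(1), of A z0] Aopen pre by simp
  finally have "ennreal (s^2) * ennreal (pi / (8 * K2^2)) \<le> emeasure lborel A" .
  moreover have "ennreal (s^2 * (pi / (8 * K2^2))) = ennreal (s^2) * ennreal (pi / (8 * K2^2))"
    by (rule ennreal_mult) auto
  ultimately show ?thesis by (simp only: A_def)
qed

lemma limit_aux:
  fixes x c r :: real
  assumes c: "c > 0" and r: "r > 0" and x: "x \<ge> 0"
    and H: "\<And>s. 0 < s \<Longrightarrow> s < r \<Longrightarrow> s^2 * c \<le> x"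
  shows "r^2 * c \<le> x"
proof (rule ccontr)
  assume "\<not> r^2 * c \<le> x"
  then have lt: "x / c < r^2" using c by (simp add: field_simps)
  define q where "q = sqrt (x / c)"
  have q0: "q \<ge> 0" using x c by (simp add: q_def)
  have qr: "q < r" using lt r unfolding q_def
    by (metis abs_of_pos real_sqrt_abs real_sqrt_less_mono)
  define s where "s = (q + r) / 2"
  have s0: "0 < s" "s < r" "q < s" using q0 qr r by (auto simp: s_def)
  have "q^2 < s^2" using s0 q0 by (intro power_strict_mono) auto
  moreover have "q^2 = x / c" using x c by (simp add: q_def)
  ultimately have "x < s^2 * c" using c by (simp add: field_simps)
  with H[OF s0(1,2)] show False by simp
qed

theorem lemma3p7:
  fixes K2 :: real
  assumes K2_pos: "K2 > 0"
    and K2_bound: "\<And>g. g holomorphic_on ball 0 1 \<Longrightarrow> g ` ball 0 1 \<subseteq> sectorG \<Longrightarrow>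
           L2_norm_sq_disk g \<le> ennreal ((K2 * cmod (g 0))\<^sup>2)"
  shows "\<And>(z0::complex) (r::real) f. r > 0 \<Longrightarrow> f holomorphic_on ball z0 r \<Longrightarrow>
           f ` ball z0 r \<subseteq> sectorG \<Longrightarrow>
           area_measure {z \<in> ball z0 r. Re (f z) > Re (f z0) / 2}
             \<ge> ennreal (1 / (8 * K2\<^sup>2)) * area_measure (ball z0 r)"
proof -
  fix z0 :: complex and r :: real and f :: "complex \<Rightarrow> complex"
  assume r: "r > 0" and f: "f holomorphic_on ball z0 r" and fG: "f ` ball z0 r \<subseteq> sectorG"
  define c where "c = pi / (8 * K2^2)"
  have c0: "c > 0" using K2_pos by (simp add: c_def)
  define A where "A = {z \<in> ball z0 r. Re (f z) > Re (f z0) / 2}"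
  have fc: "continuous_on (ball z0 r) f" using holomorphic_on_imp_continuous_on[OF f] .
  have Aeq: "A = ball z0 r \<inter> f -` {z. Re z > Re (f z0) / 2}" by (auto simp: A_def)
  have Aopen: "open A" unfolding Aeq by (rule continuous_open_preimage[OF fc open_ball open_halfspace_Re_gt])
  have Afin: "emeasure lborel A < \<infinity>"
    by (rule le_less_trans[OF emeasure_mono[of _ "ball z0 r"] emeasure_lborel_ball_finite]) (auto simp: A_def)
  define x where "x = measure lborel A"
  have Ax: "emeasure lborel A = ennreal x" using Afin by (simp add: x_def emeasure_eq_ennreal_measure less_top)
  have x0: "x \<ge> 0" by (simp add: x_def)
  have H: "s^2 * c \<le> x" if s: "0 < s" "s < r" for s
  proof -
    have "ennreal (s^2 * c) \<le> emeasure lborel {z \<in> ball z0 s. Re (f z) > Re (f z0) / 2}"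
      unfolding c_def by (rule step_s[OF K2_pos K2_bound s f fG])
    also have "\<dots> \<le> emeasure lborel A"
      using s Aopen by (intro emeasure_mono) (auto simp: A_def)
    finally have "ennreal (s^2 * c) \<le> ennreal x" using Ax by simp
    then show ?thesis using x0 by (simp add: ennreal_le_iff)
  qed
  have xr: "r^2 * c \<le> x" by (rule limit_aux[OF c0 r x0 H])
  have "ennreal (1 / (8 * K2\<^sup>2)) * area_measure (ball z0 r) = ennreal (1 / (8 * K2\<^sup>2)) * (ennreal (pi * r^2) / ennreal pi)"
    using r by (simp add: area_measure_def emeasure_ball_C)
  also have "ennreal (pi * r^2) / ennreal pi = ennreal (r^2)"
    using divide_ennreal[of "pi * r^2" pi] by simp
  also have "ennreal (1 / (8 * K2\<^sup>2)) * ennreal (r^2) = ennreal (r^2 * c / pi)"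
    by (simp add: c_def ennreal_power[symmetric] ennreal_mult''[symmetric] field_simps)
  also have "\<dots> \<le> ennreal (x / pi)"
    using xr by (intro ennreal_leI divide_right_mono) auto
  also have "\<dots> = area_measure A"
    using divide_ennreal[of x pi] x0 by (simp add: area_measure_def Ax)
  finally show "area_measure {z \<in> ball z0 r. Re (f z) > Re (f z0) / 2}
             \<ge> ennreal (1 / (8 * K2\<^sup>2)) * area_measure (ball z0 r)" by (simp add: A_def)
qed

end
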